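(* In an operational theory, let $\mathcal{M}_1,\mathcal{M}_2,\mathcal{M}_3$ be binary-outcome measurements (outcomes $X_i\in\{0,1\}$) that are pairwise jointly measurable, with joint measurements $\mathcal{M}_{ij}$ ($i<j$), and suppose there is a preparation $\mathcal{P}_*$ such that for all $i\neq j$, $p(X_i=0,X_j=1|\mathcal{M}_{ij};\mathcal{P}_* )=p(X_i=1,X_j=0|\mathcal{M}_{ij};\mathcal{P}_* )=\tfrac12$. Then $\mathcal{M}_1,\mathcal{M}_2,\mathcal{M}_3$ are not (triplewise) jointly measurable.
   Context: An operational theory assigns outcome probabilities $p(X|M;P)$ to preparation and measurement procedures; measurements $\mathcal{M}$ are equivalence classes of measurement procedures giving identical statistics for all preparations. A set of measurements $\{\mathcal{M}_1,\dots,\mathcal{M}_N\}$ is jointly measurable if there exists a measurement $\mathcal{M}$ whose outcome set is the Cartesian product of the outcome sets of the $\mathcal{M}_k$ and such that, for every preparation and every subset $S$ of the indices, the outcome distribution of the joint measurement of $\{\mathcal{M}_s:s\in S\}$ (in particular of each single $\mathcal{M}_s$) is the corresponding marginal of the outcome distribution of $\mathcal{M}$. A set is pairwise jointly measurable if every two-element subset is jointly measurable. *)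

theory Defs
  imports "HOL-Probability.Probability_Mass_Function"
begin

text \<open>Outcomes: atomic values or tuples (elements of Cartesian products of outcome sets).\<close>
datatype 'a outcome = Val 'a | Tup "'a outcome list"

text \<open>A measurement (equivalence class of measurement procedures) is represented by its
  outcome set together with its statistics: for every preparation, a distribution over outcomes,
  i.e. p(X|M;P) = pmf (stat M P) X.\<close>
type_synonym ('a, 'p) meas = "'a outcome set \<times> ('p \<Rightarrow> 'a outcome pmf)"

definition outcomes :: "('a, 'p) meas \<Rightarrow> 'a outcome set" where
  "outcomes M = fst M"

definition stat :: "('a, 'p) meas \<Rightarrow> 'p \<Rightarrow> 'a outcome pmf" where
  "stat M = snd M"

text \<open>An operational theory: a set T of realizable measurements (preparations are the
  elements of type 'p); each outcome distribution is supported on the outcome set.\<close>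
definition operational_theory :: "('a, 'p) meas set \<Rightarrow> bool" where
  "operational_theory T \<longleftrightarrow> (\<forall>M\<in>T. \<forall>P. set_pmf (stat M P) \<subseteq> outcomes M)"

fun component :: "nat \<Rightarrow> 'a outcome \<Rightarrow> 'a outcome" where
  "component i (Tup xs) = xs ! i"
| "component i (Val a) = Val a"

fun proj :: "nat list \<Rightarrow> 'a outcome \<Rightarrow> 'a outcome" where
  "proj S (Tup xs) = Tup (map ((!) xs) S)"
| "proj S (Val a) = Val a"

text \<open>M is a joint measurement (in T) of the family Ms, where J S is the given joint
  measurement of the subfamily indexed by the (increasing) index list S, for proper
  subfamilies with at least two members.\<close>
definition joint_meas_of ::
  "('a, 'p) meas set \<Rightarrow> ('a, 'p) meas list \<Rightarrow> (nat list \<Rightarrow> ('a, 'p) meas) \<Rightarrow> ('a, 'p) meas \<Rightarrow> bool" where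
  "joint_meas_of T Ms J M \<longleftrightarrow>
     M \<in> T \<and>
     outcomes M = Tup ` listset (map outcomes Ms) \<and>
     (\<forall>P i. i < length Ms \<longrightarrow> map_pmf (component i) (stat M P) = stat (Ms ! i) P) \<and>
     (\<forall>P S. sorted_wrt (<) S \<and> set S \<subseteq> {..<length Ms} \<and> 2 \<le> length S \<and> length S < length Ms
        \<longrightarrow> map_pmf (proj S) (stat M P) = stat (J S) P)"

definition jointly_measurable ::
  "('a, 'p) meas set \<Rightarrow> ('a, 'p) meas list \<Rightarrow> (nat list \<Rightarrow> ('a, 'p) meas) \<Rightarrow> bool" where
  "jointly_measurable T Ms J \<longleftrightarrow> (\<exists>M. joint_meas_of T Ms J M)"

end

theory Submission
  imports Defs
begin

lemma two_pt_support:
  fixes p :: "'a pmf"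
  assumes "a \<noteq> b" "pmf p a + pmf p b = 1"
  shows "set_pmf p \<subseteq> {a, b}"
proof -
  have "measure_pmf.prob p {a, b} = 1"
    using assms by (simp add: measure_measure_pmf_finite)
  then have "AE x in measure_pmf p. x \<in> {a, b}"
    by (subst (asm) measure_pmf.prob_eq_1) auto
  then show ?thesis by (auto simp: AE_measure_pmf_iff)
qed

theorem corollary1:
  fixes T :: "(nat, 'p) meas set"
    and M1 M2 M3 M12 M13 M23 :: "(nat, 'p) meas"
    and Pstar :: 'p
  assumes "operational_theory T"
    and "M1 \<in> T" and "M2 \<in> T" and "M3 \<in> T"
    and "outcomes M1 = {Val 0, Val 1}" and "outcomes M2 = {Val 0, Val 1}"
    and "outcomes M3 = {Val 0, Val 1}"
    and "joint_meas_of T [M1, M2] J0 M12"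
    and "joint_meas_of T [M1, M3] J0 M13"
    and "joint_meas_of T [M2, M3] J0 M23"
    and "\<forall>Mij \<in> {M12, M13, M23}.
           pmf (stat Mij Pstar) (Tup [Val 0, Val 1]) = 1/2 \<and>
           pmf (stat Mij Pstar) (Tup [Val 1, Val 0]) = 1/2"
  shows "\<not> jointly_measurable T [M1, M2, M3]
            ((\<lambda>_. undefined)([0, 1] := M12, [0, 2] := M13, [1, 2] := M23))"
proof
  let ?J = "(\<lambda>_. undefined)([0, 1] := M12, [0, 2] := M13, [1, 2] := M23)"
  assume "jointly_measurable T [M1, M2, M3] ?J"
  then obtain M where M: "joint_meas_of T [M1, M2, M3] ?J M"
    unfolding jointly_measurable_def by blast
  define q where "q = stat M Pstar"
  have sup: "set_pmf q \<subseteq> outcomes M"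
    using assms(1) M unfolding operational_theory_def joint_meas_of_def q_def by blast
  have out: "outcomes M = Tup ` listset [{Val 0, Val 1}, {Val 0, Val 1}, {Val 0, Val 1}]"
    using M assms(5-7) unfolding joint_meas_of_def by simp
  have marg: "map_pmf (proj S) q = stat (?J S) Pstar"
    if "S \<in> {[0,1],[0,2],[1,2]}" for S
    using M that unfolding joint_meas_of_def q_def by auto
  have ne: "Tup [Val 0, Val 1] \<noteq> (Tup [Val 1, Val 0] :: nat outcome)" by simp
  have key: "set_pmf (map_pmf (proj S) q) \<subseteq> {Tup [Val 0, Val 1], Tup [Val 1, Val 0]}"
    if "S \<in> {[0,1],[0,2],[1,2]}" for S
  proof -
    have "?J S \<in> {M12, M13, M23}" using that by auto
    then have "pmf (map_pmf (proj S) q) (Tup [Val 0, Val 1]) + pmf (map_pmf (proj S) q) (Tup [Val 1, Val 0]) = 1"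
      using marg[OF that] assms(11) by fastforce
    then show ?thesis using two_pt_support[OF ne] by blast
  qed
  obtain x where x: "x \<in> set_pmf q" using set_pmf_not_empty[of q] by blast
  then have "x \<in> outcomes M" using sup by blast
  then obtain a b c where abc: "x = Tup [a, b, c]" "a \<in> {Val 0, Val 1}" "b \<in> {Val 0, Val 1}" "c \<in> {Val 0, Val 1}"
    unfolding out by (auto simp: set_Cons_def)
  have "proj S x \<in> {Tup [Val 0, Val 1], Tup [Val 1, Val 0]}" if "S \<in> {[0,1],[0,2],[1,2]}" for S
    using key[OF that] x by auto
  from this[of "[0,1]"] this[of "[0,2]"] this[of "[1,2]"] abc show False by auto
qed

end
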